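(* Let $T_{ij,k\ell}\ge0$ ($i,j,k,\ell\in\mathbb N_0$) satisfy $\sum_{i,j\ge0}T_{ij,k\ell}=1$ for all $k,\ell\in\mathbb N_0$, and define $\mathcal R:\ell^1(\mathbb N_0)\to\ell^1(\mathbb N_0)$ by $\mathcal R(0)=0$ and $$\mathcal R(x)_i=\frac{1}{\|x\|_1}\sum_{j,k,\ell\ge0}T_{ij,k\ell}\,x_k x_\ell\qquad (x\neq0).$$ Then $\|\mathcal R(x)-\mathcal R(y)\|_1\le 3\|x-y\|_1$ for all $x,y\in\ell^1(\mathbb N_0)$, and $\|\mathcal R(x)-\mathcal R(y)\|_1\le 2\|x-y\|_1$ for all $x,y\in\mathcal M_r$.
   Context: $\ell^1(\mathbb N_0)$ is the space of real sequences with $\|x\|_1=\sum_{k\ge0}|x_k|<\infty$. $\mathcal M_r$ ($r>0$) denotes the set of (measures on $\mathbb N_0$ identified with) elements $x\in\ell^1(\mathbb N_0)$ of total mass $\|x\|_1=r$. *)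

theory Defs
  imports "HOL-Analysis.Analysis"
begin

definition l1 :: "(nat \<Rightarrow> real) \<Rightarrow> bool" where
  "l1 x \<longleftrightarrow> summable (\<lambda>k. \<bar>x k\<bar>)"

definition l1norm :: "(nat \<Rightarrow> real) \<Rightarrow> real" where
  "l1norm x = (\<Sum>k. \<bar>x k\<bar>)"

definition Rop :: "(nat \<Rightarrow> nat \<Rightarrow> nat \<Rightarrow> nat \<Rightarrow> real) \<Rightarrow> (nat \<Rightarrow> real) \<Rightarrow> (nat \<Rightarrow> real)" where
  "Rop T x = (if x = (\<lambda>_. 0) then (\<lambda>_. 0)
     else (\<lambda>i. (1 / l1norm x) * (\<Sum>\<^sub>\<infinity>(j,k,l)\<in>UNIV. T i j k l * x k * x l)))"

end

theory Submission
  imports Defs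
begin

definition Qf :: "(nat \<Rightarrow> nat \<Rightarrow> nat \<Rightarrow> nat \<Rightarrow> real) \<Rightarrow> (nat \<Rightarrow> real) \<Rightarrow> (nat \<Rightarrow> real) \<Rightarrow> nat \<Rightarrow> real" where
  "Qf T a b i = (\<Sum>\<^sub>\<infinity>(j,k,l)\<in>UNIV. T i j k l * a k * b l)"

lemma l1_has_sum: "l1 a \<Longrightarrow> ((\<lambda>k. \<bar>a k\<bar>) has_sum l1norm a) UNIV"
  unfolding l1_def l1norm_def by (rule sums_nonneg_imp_has_sum) (auto intro: summable_sums)

lemma Qbound:
  fixes T :: "nat \<Rightarrow> nat \<Rightarrow> nat \<Rightarrow> nat \<Rightarrow> real"
  assumes nonneg: "\<And>i j k l. T i j k l \<ge> 0"
    and total: "\<And>k l. ((\<lambda>(i,j). T i j k l) has_sum 1) UNIV"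
    and a: "l1 a" and b: "l1 b"
  shows "(\<forall>i. (\<lambda>(j,k,l). T i j k l * a k * b l) summable_on UNIV) \<and> l1 (Qf T a b)
     \<and> l1norm (Qf T a b) \<le> l1norm a * l1norm b"
proof -
  define A where "A = l1norm a"
  define B where "B = l1norm b"
  have sa: "((\<lambda>k. \<bar>a k\<bar>) has_sum A) UNIV" using l1_has_sum[OF a] A_def by simp
  have sb: "((\<lambda>k. \<bar>b k\<bar>) has_sum B) UNIV" using l1_has_sum[OF b] B_def by simp
  have S1: "((\<lambda>(k,l). \<bar>a k\<bar> * \<bar>b l\<bar>) has_sum A * B) (Sigma UNIV (\<lambda>_. UNIV))"
  proof (rule has_sum_SigmaI)
    show "((\<lambda>y. (\<lambda>(k,l). \<bar>a k\<bar> * \<bar>b l\<bar>) (x, y)) has_sum \<bar>a x\<bar> * B) UNIV" for x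
      using has_sum_cmult_right[OF sb, of "\<bar>a x\<bar>"] by simp
    show "((\<lambda>x. \<bar>a x\<bar> * B) has_sum A * B) UNIV"
      using has_sum_cmult_left[OF sa, of B] by simp
    show "(\<lambda>(k,l). \<bar>a k\<bar> * \<bar>b l\<bar>) summable_on Sigma UNIV (\<lambda>_. UNIV)"
    proof (rule summable_on_SigmaI)
      show "((\<lambda>y. (\<lambda>(k,l). \<bar>a k\<bar> * \<bar>b l\<bar>) (x, y)) has_sum \<bar>a x\<bar> * B) UNIV" for x
        using has_sum_cmult_right[OF sb, of "\<bar>a x\<bar>"] by simp
      show "(\<lambda>x. \<bar>a x\<bar> * B) summable_on UNIV"
        using has_sum_cmult_left[OF sa, of B] summable_on_def by blast
    qed auto
  qed
  have S2: "((\<lambda>((k,l),(i,j)). T i j k l * (\<bar>a k\<bar> * \<bar>b l\<bar>)) has_sum A * B) (Sigma UNIV (\<lambda>_. UNIV))"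
  proof (rule has_sum_SigmaI)
    have h: "((\<lambda>(i,j). T i j k l * c) has_sum 1 * c) UNIV" for k l c
      using has_sum_cmult_left[OF total[of k l], of c] by (simp add: split_def)
    show "((\<lambda>y. (\<lambda>((k,l),(i,j)). T i j k l * (\<bar>a k\<bar> * \<bar>b l\<bar>)) (x, y)) has_sum (\<lambda>(k,l). \<bar>a k\<bar> * \<bar>b l\<bar>) x) UNIV" for x
      using h[of "fst x" "snd x" "\<bar>a (fst x)\<bar> * \<bar>b (snd x)\<bar>"] by (simp add: split_def)
    show "((\<lambda>(k,l). \<bar>a k\<bar> * \<bar>b l\<bar>) has_sum A * B) UNIV" using S1 by simp
    show "(\<lambda>((k,l),(i,j)). T i j k l * (\<bar>a k\<bar> * \<bar>b l\<bar>)) summable_on Sigma UNIV (\<lambda>_. UNIV)"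
    proof (rule summable_on_SigmaI)
      show "((\<lambda>y. (\<lambda>((k,l),(i,j)). T i j k l * (\<bar>a k\<bar> * \<bar>b l\<bar>)) (x, y)) has_sum (\<lambda>(k,l). \<bar>a k\<bar> * \<bar>b l\<bar>) x) UNIV" for x
        using h[of "fst x" "snd x" "\<bar>a (fst x)\<bar> * \<bar>b (snd x)\<bar>"] by (simp add: split_def)
      show "(\<lambda>(k,l). \<bar>a k\<bar> * \<bar>b l\<bar>) summable_on UNIV" using S1 summable_on_def by auto
    qed (auto simp: nonneg)
  qed
  define h where "h i = (\<lambda>(j,k,l). \<bar>T i j k l * a k * b l\<bar>)" for i
  have S3: "((\<lambda>(i,p). h i p) has_sum A * B) (Sigma UNIV (\<lambda>_. UNIV))"
  proof -
    have "((\<lambda>(i,p). h i p) has_sum A * B) UNIV = ((\<lambda>((k,l),(i,j)). T i j k l * (\<bar>a k\<bar> * \<bar>b l\<bar>)) has_sum A * B) UNIV"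
      by (rule has_sum_reindex_bij_witness[where i = "\<lambda>((k,l),(i,j)). (i,(j,k,l))" and j = "\<lambda>(i,j,k,l). ((k,l),(i,j))"])
        (auto simp: h_def abs_mult nonneg)
    then show ?thesis using S2 by simp
  qed
  have hs: "h i summable_on UNIV" for i
    using summable_on_SigmaD1[of h UNIV "\<lambda>_. UNIV" i] S3 summable_on_def by blast
  define G where "G i = infsum (h i) UNIV" for i
  have GS: "(G has_sum A * B) UNIV"
    using has_sum_Sigma'[OF S3[unfolded case_prod_beta]] hs by (simp add: G_def has_sum_infsum case_prod_beta)
  have Gsum: "G sums (A * B)" using has_sum_imp_sums[OF GS] .
  have fs: "(\<lambda>(j,k,l). T i j k l * a k * b l) summable_on UNIV" for i
  proof -
    have "(\<lambda>x. norm ((\<lambda>(j,k,l). T i j k l * a k * b l) x)) summable_on UNIV"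
      using hs[of i] by (simp add: h_def split_def)
    then show ?thesis by (rule abs_summable_summable)
  qed
  have QG: "\<bar>Qf T a b i\<bar> \<le> G i" for i
  proof -
    have "norm (Qf T a b i) \<le> infsum (\<lambda>x. norm ((\<lambda>(j,k,l). T i j k l * a k * b l) x)) UNIV"
      unfolding Qf_def
      by (rule norm_infsum_bound) (use hs[of i] in \<open>simp add: h_def split_def\<close>)
    then show ?thesis by (simp add: G_def h_def split_def)
  qed
  have summQ: "summable (\<lambda>i. \<bar>Qf T a b i\<bar>)"
    by (rule summable_comparison_test[of _ G]) (use QG Gsum in \<open>auto simp: sums_iff\<close>)
  have "l1norm (Qf T a b) \<le> A * B"
    unfolding l1norm_def using suminf_le[OF QG summQ] Gsum by (simp add: sums_iff)
  then show ?thesis using fs summQ by (simp add: l1_def A_def B_def)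
qed

lemma l1norm_nonneg: "l1 x \<Longrightarrow> 0 \<le> l1norm x"
  unfolding l1norm_def l1_def by (simp add: suminf_nonneg)

lemma l1norm_zero: "l1 x \<Longrightarrow> l1norm x = 0 \<Longrightarrow> x = (\<lambda>_. 0)"
  unfolding l1_def l1norm_def by (subst (asm) suminf_eq_zero_iff) auto

lemma l1norm_zero_fun: "l1norm (\<lambda>_. 0) = 0"
  by (simp add: l1norm_def)

lemma l1_lin:
  assumes u: "l1 u" and v: "l1 v"
  shows "l1 (\<lambda>i. c * u i + d * v i) \<and> l1norm (\<lambda>i. c * u i + d * v i) \<le> \<bar>c\<bar> * l1norm u + \<bar>d\<bar> * l1norm v"
proof -
  have su: "summable (\<lambda>i. \<bar>u i\<bar>)" and sv: "summable (\<lambda>i. \<bar>v i\<bar>)" using u v by (auto simp: l1_def)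
  have s: "summable (\<lambda>i. \<bar>c\<bar> * \<bar>u i\<bar> + \<bar>d\<bar> * \<bar>v i\<bar>)"
    using su sv by (intro summable_add summable_mult)
  have le: "\<bar>c * u i + d * v i\<bar> \<le> \<bar>c\<bar> * \<bar>u i\<bar> + \<bar>d\<bar> * \<bar>v i\<bar>" for i
    by (metis abs_mult abs_triangle_ineq)
  have s2: "summable (\<lambda>i. \<bar>c * u i + d * v i\<bar>)"
    by (rule summable_comparison_test[OF _ s]) (use le in auto)
  have "l1norm (\<lambda>i. c * u i + d * v i) \<le> (\<Sum>i. \<bar>c\<bar> * \<bar>u i\<bar> + \<bar>d\<bar> * \<bar>v i\<bar>)"
    unfolding l1norm_def by (rule suminf_le[OF le s2 s])
  also have "\<dots> = \<bar>c\<bar> * l1norm u + \<bar>d\<bar> * l1norm v"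
    unfolding l1norm_def using su sv
    by (subst suminf_add[symmetric]) (auto intro: summable_mult simp: suminf_mult)
  finally show ?thesis using s2 by (simp add: l1_def)
qed

lemma l1_diff: "l1 x \<Longrightarrow> l1 y \<Longrightarrow> l1 (\<lambda>i. x i - y i)"
  using l1_lin[of x y 1 "-1"] by simp

lemma l1norm_swap: "l1norm (\<lambda>i. f i - g i) = l1norm (\<lambda>i. g i - f i)"
  unfolding l1norm_def by (simp add: abs_minus_commute)

lemma l1norm_tri: "l1 x \<Longrightarrow> l1 y \<Longrightarrow> l1norm x \<le> l1norm (\<lambda>i. x i - y i) + l1norm y"
  using l1_lin[of "\<lambda>i. x i - y i" y 1 1] l1_diff[of x y] by simp

lemma l1norm_rev: "l1 x \<Longrightarrow> l1 y \<Longrightarrow> \<bar>l1norm x - l1norm y\<bar> \<le> l1norm (\<lambda>i. x i - y i)"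
  using l1norm_tri[of x y] l1norm_tri[of y x] l1norm_swap[of x y] by auto

lemma Qdecomp:
  fixes T :: "nat \<Rightarrow> nat \<Rightarrow> nat \<Rightarrow> nat \<Rightarrow> real"
  assumes nonneg: "\<And>i j k l. T i j k l \<ge> 0"
    and total: "\<And>k l. ((\<lambda>(i,j). T i j k l) has_sum 1) UNIV"
    and x: "l1 x" and y: "l1 y"
  shows "Qf T x x i = Qf T (\<lambda>i. x i - y i) x i + Qf T y (\<lambda>i. x i - y i) i + Qf T y y i"
proof -
  have D: "l1 (\<lambda>i. x i - y i)" using l1_diff[OF x y] .
  have s1: "(\<lambda>(j,k,l). T i j k l * (x k - y k) * x l) summable_on UNIV"
    using Qbound[OF nonneg total D x] by simp
  have s2: "(\<lambda>(j,k,l). T i j k l * y k * (x l - y l)) summable_on UNIV"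
    using Qbound[OF nonneg total y D] by simp
  have s3: "(\<lambda>(j,k,l). T i j k l * y k * y l) summable_on UNIV"
    using Qbound[OF nonneg total y y] by simp
  have "Qf T (\<lambda>i. x i - y i) x i + Qf T y (\<lambda>i. x i - y i) i + Qf T y y i
     = (\<Sum>\<^sub>\<infinity>p\<in>UNIV. (\<lambda>(j,k,l). T i j k l * (x k - y k) * x l) p + (\<lambda>(j,k,l). T i j k l * y k * (x l - y l)) p + (\<lambda>(j,k,l). T i j k l * y k * y l) p)"
    unfolding Qf_def
    by (subst infsum_add[OF summable_on_add[OF s1 s2] s3], subst infsum_add[OF s1 s2]) simp
  also have "\<dots> = Qf T x x i"
    unfolding Qf_def by (rule infsum_cong) (auto simp: algebra_simps)
  finally show ?thesis by simp
qed

lemma Rop_zero: "Rop T (\<lambda>_. 0) = (\<lambda>_. 0)" by (simp add: Rop_def)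
lemma Rop_nz: "x \<noteq> (\<lambda>_. 0) \<Longrightarrow> Rop T x i = (1 / l1norm x) * Qf T x x i"
  by (simp add: Rop_def Qf_def)


lemma main_asym:
  fixes T :: "nat \<Rightarrow> nat \<Rightarrow> nat \<Rightarrow> nat \<Rightarrow> real"
  assumes nonneg: "\<And>i j k l. T i j k l \<ge> 0"
    and total: "\<And>k l. ((\<lambda>(i,j). T i j k l) has_sum 1) UNIV"
    and x: "l1 x" and y: "l1 y" and le: "l1norm y \<le> l1norm x"
  shows "l1norm (\<lambda>i. Rop T x i - Rop T y i) \<le> 2 * l1norm (\<lambda>i. x i - y i) + (l1norm x - l1norm y)"
proof -
  define nx ny nD where "nx = l1norm x" and "ny = l1norm y" and "nD = l1norm (\<lambda>i. x i - y i)"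
  have D: "l1 (\<lambda>i. x i - y i)" using l1_diff[OF x y] .
  have nD0: "0 \<le> nD" using l1norm_nonneg[OF D] nD_def by simp
  have ny0: "0 \<le> ny" using l1norm_nonneg[OF y] ny_def by simp
  show ?thesis
  proof (cases "x = (\<lambda>_. 0)")
    case True
    then have "nx = 0" by (simp add: nx_def l1norm_zero_fun)
    with le ny0 have "ny = 0" by (simp add: nx_def ny_def)
    then have "y = (\<lambda>_. 0)" using l1norm_zero[OF y] ny_def by simp
    with True show ?thesis by (simp add: Rop_zero l1norm_zero_fun)
  next
    case xnz: False
    have nxpos: "nx > 0"
      using l1norm_nonneg[OF x] l1norm_zero[OF x] xnz nx_def by force
    have Qxx: "l1 (Qf T x x)" "l1norm (Qf T x x) \<le> nx * nx"
      using Qbound[OF nonneg total x x] nx_def by auto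
    show ?thesis
    proof (cases "y = (\<lambda>_. 0)")
      case True
      have "l1norm (\<lambda>i. Rop T x i - Rop T y i) = l1norm (\<lambda>i. (1/nx) * Qf T x x i + 0 * Qf T x x i)"
        using True xnz by (simp add: Rop_zero Rop_nz nx_def)
      also have "\<dots> \<le> (1/nx) * (nx * nx)"
      proof -
        have "l1norm (\<lambda>i. (1/nx) * Qf T x x i + 0 * Qf T x x i) \<le> \<bar>1/nx\<bar> * l1norm (Qf T x x) + \<bar>0\<bar> * l1norm (Qf T x x)"
          using l1_lin[OF Qxx(1) Qxx(1), of "1/nx" 0] by blast
        also have "\<dots> = (1/nx) * l1norm (Qf T x x)" using nxpos by simp
        also have "\<dots> \<le> (1/nx) * (nx * nx)" using Qxx(2) nxpos by (intro mult_left_mono) auto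
        finally show ?thesis .
      qed
      also have "\<dots> = nx" using nxpos by simp
      finally show ?thesis using True nD_def nx_def ny_def nD0 
        by (simp add: l1norm_zero_fun)
    next
      case ynz: False
      have nypos: "ny > 0"
        using l1norm_nonneg[OF y] l1norm_zero[OF y] ynz ny_def by force
      define U where "U = Qf T (\<lambda>i. x i - y i) x"
      define V where "V = Qf T y (\<lambda>i. x i - y i)"
      define W where "W = Qf T y y"
      have U: "l1 U" "l1norm U \<le> nD * nx" using Qbound[OF nonneg total D x] U_def nD_def nx_def by auto
      have V: "l1 V" "l1norm V \<le> ny * nD" using Qbound[OF nonneg total y D] V_def nD_def ny_def by auto
      have W: "l1 W" "l1norm W \<le> ny * ny" using Qbound[OF nonneg total y y] W_def ny_def by auto
      have UV: "l1 (\<lambda>i. 1 * U i + 1 * V i)" "l1norm (\<lambda>i. 1 * U i + 1 * V i) \<le> nD * nx + ny * nD"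
        using l1_lin[OF U(1) V(1), of 1 1] U(2) V(2) by auto
      have eq: "Rop T x i - Rop T y i = (1/nx) * (1 * U i + 1 * V i) + (1/nx - 1/ny) * W i" for i
        using Qdecomp[OF nonneg total x y, where i=i] xnz ynz
        by (simp add: Rop_nz nx_def ny_def U_def V_def W_def algebra_simps)
      have "l1norm (\<lambda>i. Rop T x i - Rop T y i) \<le> \<bar>1/nx\<bar> * l1norm (\<lambda>i. 1 * U i + 1 * V i) + \<bar>1/nx - 1/ny\<bar> * l1norm W"
        using l1_lin[OF UV(1) W(1), of "1/nx" "1/nx - 1/ny"] by (simp only: eq)
      also have "\<dots> \<le> (1/nx) * (nD * nx + ny * nD) + ((nx - ny) / (nx * ny)) * (ny * ny)"
      proof (rule add_mono)
        show "\<bar>1/nx\<bar> * l1norm (\<lambda>i. 1 * U i + 1 * V i) \<le> (1/nx) * (nD * nx + ny * nD)"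
          using UV(2) nxpos by (simp add: divide_right_mono)
        have "\<bar>1/nx - 1/ny\<bar> = (nx - ny) / (nx * ny)"
          using nxpos nypos le by (simp add: field_simps nx_def ny_def)
        moreover have "0 \<le> (nx - ny) / (nx * ny)" using nxpos nypos le nx_def ny_def by simp
        ultimately show "\<bar>1/nx - 1/ny\<bar> * l1norm W \<le> ((nx - ny) / (nx * ny)) * (ny * ny)"
          using W(2) by (metis mult_left_mono)
      qed
      also have "\<dots> = nD + (ny / nx) * nD + (nx - ny) * (ny / nx)"
        using nxpos nypos by (simp add: field_simps)
      also have "\<dots> \<le> nD + nD + (nx - ny)"
      proof -
        have r: "ny / nx \<le> 1" "0 \<le> ny / nx" using nxpos nypos le nx_def ny_def by auto
        have "(ny / nx) * nD \<le> nD" using r nD0 by (metis mult.commute mult_left_le_one_le)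
        moreover have "(nx - ny) * (ny / nx) \<le> nx - ny"
          using r le nx_def ny_def by (metis diff_ge_0_iff_ge mult_right_le_one_le)
        ultimately show ?thesis by simp
      qed
      finally show ?thesis by (simp add: nx_def ny_def nD_def)
    qed
  qed
qed


theorem proposition1:
  fixes T :: "nat \<Rightarrow> nat \<Rightarrow> nat \<Rightarrow> nat \<Rightarrow> real"
  assumes nonneg: "\<And>i j k l. T i j k l \<ge> 0"
    and total: "\<And>k l. ((\<lambda>(i,j). T i j k l) has_sum 1) UNIV"
  shows "(\<forall>x. l1 x \<longrightarrow> l1 (Rop T x))
    \<and> (\<forall>x y. l1 x \<longrightarrow> l1 y \<longrightarrow>
         l1norm (\<lambda>i. Rop T x i - Rop T y i) \<le> 3 * l1norm (\<lambda>i. x i - y i))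
    \<and> (\<forall>r x y. r > 0 \<longrightarrow> l1 x \<longrightarrow> l1 y \<longrightarrow> l1norm x = r \<longrightarrow> l1norm y = r \<longrightarrow>
         l1norm (\<lambda>i. Rop T x i - Rop T y i) \<le> 2 * l1norm (\<lambda>i. x i - y i))"
proof -
  have sym: "l1norm (\<lambda>i. Rop T x i - Rop T y i) \<le> 2 * l1norm (\<lambda>i. x i - y i) + \<bar>l1norm x - l1norm y\<bar>"
    if x: "l1 x" and y: "l1 y" for x y
  proof (cases "l1norm y \<le> l1norm x")
    case True
    then show ?thesis using main_asym[OF nonneg total x y] by simp
  next
    case False
    then have "l1norm (\<lambda>i. Rop T y i - Rop T x i) \<le> 2 * l1norm (\<lambda>i. y i - x i) + (l1norm y - l1norm x)"
      using main_asym[OF nonneg total y x] by simp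
    then show ?thesis using False l1norm_swap[of "Rop T x" "Rop T y"] l1norm_swap[of x y] by simp
  qed
  have A: "l1 (Rop T x)" if x: "l1 x" for x
  proof (cases "x = (\<lambda>_. 0)")
    case True then show ?thesis by (simp add: Rop_zero l1_def)
  next
    case False
    have Q: "l1 (Qf T x x)" using Qbound[OF nonneg total x x] by simp
    have "Rop T x = (\<lambda>i. (1 / l1norm x) * Qf T x x i + 0 * Qf T x x i)"
      using False by (simp add: Rop_nz fun_eq_iff)
    then show ?thesis using l1_lin[OF Q Q, of "1 / l1norm x" 0] by simp
  qed
  have B: "l1norm (\<lambda>i. Rop T x i - Rop T y i) \<le> 3 * l1norm (\<lambda>i. x i - y i)"
    if x: "l1 x" and y: "l1 y" for x y
    using sym[OF x y] l1norm_rev[OF x y] by simp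
  have C: "l1norm (\<lambda>i. Rop T x i - Rop T y i) \<le> 2 * l1norm (\<lambda>i. x i - y i)"
    if x: "l1 x" and y: "l1 y" and "l1norm x = r" "l1norm y = r" for x y r
    using sym[OF x y] that by simp
  show ?thesis using A B C by blast
qed

end
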